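(* Let $\rho$ be a state of a $d$-dimensional system ($d<\infty$), let $A,B$ be two copies with $\rho_A=\rho_B=\rho$, and let $j$ be an integer with $1\le j\le d-1$. For each $c$, let $d^{(j,c)}:=\dim\mathcal{V}^{(j,c)}_{\rm in}$ where $\mathcal{V}^{(j,c)}_{\rm in}:=\mathrm{span}\{|n+j,m\rangle\langle n,m|: n+m=c\}$ (over $n,n+j,m\in\{0,\dots,d-1\}$). Then $$\Delta M_A^{(j)}\le\sum_{c=0}^{2d-2-j}\big\|\Pi_{c+j}(\rho\otimes\rho)^{(j)}\Pi_c\big\|_{d^{(j,c)}\text{-KF}}-\|\rho^{(j)}\|_1.$$
   Context: Local observable $L=\sum_{n=0}^{d-1}n|n\rangle\langle n|$, $L_{AB}=L\otimes\mathbb{I}+\mathbb{I}\otimes L=\sum_{c=0}^{2d-2}c\,\Pi_c$, where $\Pi_c$ is the projector onto the eigenvalue-$c$ eigenspace of $L_{AB}$. Single-system mode: $\rho^{(j)}:=\sum_n|n+j\rangle\langle n+j|\rho|n\rangle\langle n|$ (out-of-range terms omitted); bipartite mode: $X^{(j)}:=\sum_c\Pi_{c+j}X\Pi_c$. $M^{(j)}(\sigma):=\|\sigma^{(j)}\|_1$. $\Delta M_A^{(j)}:=\max_{V_{AB}}M^{(j)}(\sigma_A)-M^{(j)}(\rho)$, $\sigma_A=\mathrm{tr}_B[V_{AB}(\rho\otimes\rho)V_{AB}^\dagger]$, maximum over unitaries with $[V_{AB},L_{AB}]=0$. $\|P\|_{\alpha\text{-KF}}$ is the sum of the $\alpha$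 largest singular values of $P$. *)

theory Defs
  imports "Jordan_Normal_Form.Schur_Decomposition" "HOL-Computational_Algebra.Polynomial"
    "HOL-Library.Multiset"
begin

text \<open>The d-dimensional system has basis 0..d-1; the bipartite basis vector
  |n,m> of AB has index n*d+m (A = first factor, B = second factor).\<close>

definition mtrace :: "complex mat \<Rightarrow> complex" where
  "mtrace A = (\<Sum>i<dim_row A. A $$ (i,i))"

definition hermitian :: "complex mat \<Rightarrow> bool" where
  "hermitian A \<longleftrightarrow> mat_adjoint A = A"

definition psd :: "nat \<Rightarrow> complex mat \<Rightarrow> bool" where
  "psd n A \<longleftrightarrow> A \<in> carrier_mat n n \<and> hermitian A \<and>
     (\<forall>v \<in> carrier_vec n. 0 \<le> Re (cscalar_prod (A *\<^sub>v v) v))"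

definition density_op :: "nat \<Rightarrow> complex mat \<Rightarrow> bool" where
  "density_op n \<rho> \<longleftrightarrow> psd n \<rho> \<and> mtrace \<rho> = 1"

definition unitary :: "nat \<Rightarrow> complex mat \<Rightarrow> bool" where
  "unitary n U \<longleftrightarrow> U \<in> carrier_mat n n \<and> mat_adjoint U * U = 1\<^sub>m n \<and> U * mat_adjoint U = 1\<^sub>m n"

definition singular_values :: "complex mat \<Rightarrow> real multiset" where
  "singular_values A = image_mset (\<lambda>z. sqrt (Re z)) (proots (char_poly (mat_adjoint A * A)))"

definition trace_norm :: "complex mat \<Rightarrow> real" where
  "trace_norm A = sum_mset (singular_values A)"

definition ky_fan_norm :: "nat \<Rightarrow> complex mat \<Rightarrow> real" where
  "ky_fan_norm k A = sum_list (take k (rev (sorted_list_of_multiset (singular_values A))))"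

definition tensor :: "nat \<Rightarrow> complex mat \<Rightarrow> complex mat \<Rightarrow> complex mat" where
  "tensor d X Y = mat (d*d) (d*d) (\<lambda>(i,k). X $$ (i div d, k div d) * Y $$ (i mod d, k mod d))"

text \<open>Eigenvalue of L_AB = L \<otimes> I + I \<otimes> L on basis vector |n,m>: n+m.\<close>
definition Lval :: "nat \<Rightarrow> nat \<Rightarrow> nat" where
  "Lval d i = i div d + i mod d"

definition L_AB :: "nat \<Rightarrow> complex mat" where
  "L_AB d = mat (d*d) (d*d) (\<lambda>(i,k). if i = k then of_nat (Lval d i) else 0)"

definition Pi_proj :: "nat \<Rightarrow> nat \<Rightarrow> complex mat" where
  "Pi_proj d c = mat (d*d) (d*d) (\<lambda>(i,k). if i = k \<and> Lval d i = c then 1 else 0)"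

text \<open>Single-system mode: rho^(j) = sum_n |n+j><n+j| rho |n><n| (entries (n+j,n)).\<close>
definition smode :: "nat \<Rightarrow> nat \<Rightarrow> complex mat \<Rightarrow> complex mat" where
  "smode d j \<rho> = mat d d (\<lambda>(a,b). if a = b + j then \<rho> $$ (a,b) else 0)"

text \<open>Bipartite mode: X^(j) = sum_c Pi_(c+j) X Pi_c (entries between eigenspaces c+j and c).\<close>
definition bmode :: "nat \<Rightarrow> nat \<Rightarrow> complex mat \<Rightarrow> complex mat" where
  "bmode d j X = mat (d*d) (d*d) (\<lambda>(a,b). if Lval d a = Lval d b + j then X $$ (a,b) else 0)"

definition Mj :: "nat \<Rightarrow> nat \<Rightarrow> complex mat \<Rightarrow> real" where
  "Mj d j \<sigma> = trace_norm (smode d j \<sigma>)"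

definition ptrace_B :: "nat \<Rightarrow> complex mat \<Rightarrow> complex mat" where
  "ptrace_B d X = mat d d (\<lambda>(n,n'). \<Sum>m<d. X $$ (n*d+m, n'*d+m))"

definition DeltaM_A :: "nat \<Rightarrow> nat \<Rightarrow> complex mat \<Rightarrow> real" where
  "DeltaM_A d j \<rho> =
     Sup {Mj d j (ptrace_B d (V * tensor d \<rho> \<rho> * mat_adjoint V)) | V.
            unitary (d*d) V \<and> V * L_AB d = L_AB d * V} - Mj d j \<rho>"

text \<open>d^(j,c) = dim span{|n+j,m><n,m| : n+m=c}; these are distinct matrix units,
  hence linearly independent, so the dimension is the number of index pairs.\<close>
definition dim_in :: "nat \<Rightarrow> nat \<Rightarrow> nat \<Rightarrow> nat" where
  "dim_in d j c = card {(n,m). n + j < d \<and> m < d \<and> n + m = c}"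

end

theory Submission
  imports Defs
begin

lemma adj_dims[simp]: "dim_row (mat_adjoint A) = dim_col A" "dim_col (mat_adjoint A) = dim_row A"
  unfolding mat_adjoint_def by auto

lemma adj_carrier[simp]: "A \<in> carrier_mat m n \<Longrightarrow> mat_adjoint A \<in> carrier_mat n m"
  unfolding carrier_mat_def by auto

lemma adj_index[simp]: "i < dim_col A \<Longrightarrow> j < dim_row A \<Longrightarrow> mat_adjoint A $$ (i,j) = cnj (A $$ (j,i))"
  unfolding mat_adjoint_def by (simp add: mat_of_rows_index)

lemma adj_adj[simp]: "mat_adjoint (mat_adjoint (A::complex mat)) = A"
  by (rule eq_matI, auto)

lemma adj_mult: assumes "A \<in> carrier_mat m n" "B \<in> carrier_mat n k"
  shows "mat_adjoint (A * (B::complex mat)) = mat_adjoint B * mat_adjoint A"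
proof (rule eq_matI)
  fix i j assume ij: "i < dim_row (mat_adjoint B * mat_adjoint A)" "j < dim_col (mat_adjoint B * mat_adjoint A)"
  hence i: "i < k" and j: "j < m" using assms by auto
  have "mat_adjoint (A * B) $$ (i,j) = cnj (\<Sum>l<n. A $$ (j,l) * B $$ (l,i))"
    using assms i j by (simp add: scalar_prod_def lessThan_atLeast0)
  also have "\<dots> = (\<Sum>l<n. cnj (B $$ (l,i)) * cnj (A $$ (j,l)))"
    by (simp add: mult.commute)
  also have "\<dots> = (mat_adjoint B * mat_adjoint A) $$ (i,j)"
    using assms i j by (simp add: scalar_prod_def lessThan_atLeast0)
  finally show "mat_adjoint (A * B) $$ (i,j) = (mat_adjoint B * mat_adjoint A) $$ (i,j)" .
qed (use assms in auto)

lemma adj_one[simp]: "mat_adjoint (1\<^sub>m n :: complex mat) = 1\<^sub>m n"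
  by (rule eq_matI, auto)

lemma assoc4: assumes "A \<in> carrier_mat n1 n2" "B \<in> carrier_mat n2 n3" "C \<in> carrier_mat n3 n4" "D \<in> carrier_mat n4 n5"
  shows "A * B * (C * (D::'a::semiring_1 mat)) = A * (B * C) * D"
proof -
  have "A * B * (C * D) = A * (B * (C * D))" using assms by (intro assoc_mult_mat, auto)
  also have "B * (C * D) = B * C * D" using assms by (intro assoc_mult_mat[symmetric], auto)
  also have "A * (B * C * D) = A * (B * C) * D" using assms by (intro assoc_mult_mat[symmetric], auto)
  finally show ?thesis .
qed

lemma unitary_mult: assumes "unitary n U" "unitary n V" shows "unitary n (U * V)"
proof -
  have U: "U \<in> carrier_mat n n" and V: "V \<in> carrier_mat n n" 
   and u1: "mat_adjoint U * U = 1\<^sub>m n" and u2: "U * mat_adjoint U = 1\<^sub>m n"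
   and v1: "mat_adjoint V * V = 1\<^sub>m n" and v2: "V * mat_adjoint V = 1\<^sub>m n"
   using assms unfolding unitary_def by auto
  have "mat_adjoint (U*V) * (U*V) = mat_adjoint V * mat_adjoint U * (U * V)"
    using U V by (simp add: adj_mult)
  also have "\<dots> = mat_adjoint V * (mat_adjoint U * U) * V"
    by (rule assoc4[of _ n n _ n _ n _ n], insert U V, auto)
  also have "\<dots> = 1\<^sub>m n" unfolding u1 using V v1 by simp
  finally have 1: "mat_adjoint (U*V) * (U*V) = 1\<^sub>m n" .
  have "(U*V) * mat_adjoint (U*V) = U * V * (mat_adjoint V * mat_adjoint U)"
    using U V by (simp add: adj_mult)
  also have "\<dots> = U * (V * mat_adjoint V) * mat_adjoint U"
    by (rule assoc4[of _ n n _ n _ n _ n], insert U V, auto)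
  also have "\<dots> = 1\<^sub>m n" unfolding v2 using U u2 by simp
  finally have 2: "(U*V) * mat_adjoint (U*V) = 1\<^sub>m n" .
  show ?thesis unfolding unitary_def using 1 2 mult_carrier_mat[OF U V] by blast
qed

lemma cprod_smult: assumes "x \<in> carrier_vec n" "y \<in> carrier_vec n"
  shows "(a \<cdot>\<^sub>v x) \<bullet>c (b \<cdot>\<^sub>v (y::complex vec)) = a * cnj b * (x \<bullet>c y)"
  using assms by (simp add: scalar_prod_def sum_distrib_left algebra_simps)

lemma cprod_sum: assumes "x \<in> carrier_vec n" "y \<in> carrier_vec n"
  shows "x \<bullet>c (y::complex vec) = (\<Sum>k<n. x $ k * cnj (y $ k))"
  using assms by (simp add: scalar_prod_def lessThan_atLeast0)

lemma cprod_self: assumes "x \<in> carrier_vec n"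
  shows "x \<bullet>c (x::complex vec) = of_real (Re (x \<bullet>c x))" "Re (x \<bullet>c x) \<ge> 0"
    "x \<noteq> 0\<^sub>v n \<Longrightarrow> Re (x \<bullet>c x) > 0"
proof -
  have "x \<bullet>c x \<ge> 0" by (rule conjugate_square_ge_0_vec)
  thus "x \<bullet>c (x::complex vec) = of_real (Re (x \<bullet>c x))" "Re (x \<bullet>c x) \<ge> 0"
    by (auto simp: less_eq_complex_def complex_eq_iff)
  assume "x \<noteq> 0\<^sub>v n"
  hence "x \<bullet>c x > 0" using conjugate_square_greater_0_vec[OF assms] by simp
  thus "Re (x \<bullet>c x) > 0" by (auto simp: less_complex_def)
qed

definition nz :: "complex vec \<Rightarrow> complex vec" where
  "nz x = complex_of_real (1 / sqrt (Re (x \<bullet>c x))) \<cdot>\<^sub>v x"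

lemma nz_carrier[simp]: "x \<in> carrier_vec n \<Longrightarrow> nz x \<in> carrier_vec n"
  unfolding nz_def by simp

lemma nz_unit: assumes "x \<in> carrier_vec n" "x \<noteq> 0\<^sub>v n"
  shows "nz x \<bullet>c nz x = 1"
proof -
  define r where "r = Re (x \<bullet>c x)"
  have r: "r > 0" using cprod_self(3)[OF assms] unfolding r_def .
  have zr: "x \<bullet>c x = of_real r" using cprod_self(1)[OF assms(1)] unfolding r_def .
  have "nz x \<bullet>c nz x = complex_of_real (1 / sqrt r) * cnj (complex_of_real (1 / sqrt r)) * (x \<bullet>c x)"
    unfolding nz_def r_def by (rule cprod_smult[OF assms(1) assms(1)])
  also have "\<dots> = complex_of_real ((1 / sqrt r) * (1 / sqrt r) * r)"
    unfolding zr by (simp only: complex_cnj_complex_of_real of_real_mult)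
  also have "(1 / sqrt r) * (1 / sqrt r) * r = 1" using r
    by (simp add: field_simps)
  finally show ?thesis by simp
qed

lemma nz_id: assumes "x \<in> carrier_vec n" "x \<bullet>c x = 1" shows "nz x = x"
  unfolding nz_def using assms by simp

lemma nz_orth: assumes "x \<in> carrier_vec n" "y \<in> carrier_vec n" "x \<bullet>c y = 0"
  shows "nz x \<bullet>c nz y = 0"
  unfolding nz_def by (subst cprod_smult[OF assms(1,2)], simp add: assms)

lemma nz_nonzero: assumes "x \<in> carrier_vec n" "x \<noteq> 0\<^sub>v n" shows "nz x \<noteq> 0\<^sub>v n"
  using nz_unit[OF assms] assms(1) by auto

lemma blk_mult: fixes a b X Y :: "complex mat" assumes "a \<in> carrier_mat 1 1" "b \<in> carrier_mat 1 1" "X \<in> carrier_mat n n" "Y \<in> carrier_mat n n"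
  shows "four_block_mat a (0\<^sub>m 1 n) (0\<^sub>m n 1) X * four_block_mat b (0\<^sub>m 1 n) (0\<^sub>m n 1) (Y :: complex mat)
    = four_block_mat (a * b) (0\<^sub>m 1 n) (0\<^sub>m n 1) (X * Y)"
  by (subst mult_four_block_mat[OF assms(1) zero_carrier_mat zero_carrier_mat assms(3) assms(2) zero_carrier_mat zero_carrier_mat assms(4)],
      insert assms, auto)

lemma blk_adj: fixes a X :: "complex mat" assumes "a \<in> carrier_mat 1 1" "X \<in> carrier_mat n n"
  shows "mat_adjoint (four_block_mat a (0\<^sub>m 1 n) (0\<^sub>m n 1) (X :: complex mat))
    = four_block_mat (mat_adjoint a) (0\<^sub>m 1 n) (0\<^sub>m n 1) (mat_adjoint X)"
  by (rule eq_matI, insert assms, auto)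

lemma hermitian_index: assumes "hermitian A" "A \<in> carrier_mat n n" "i < n" "j < n"
  shows "A $$ (i,j) = cnj (A $$ (j,i))"
proof -
  have "A $$ (i,j) = mat_adjoint A $$ (i,j)" using assms(1) unfolding hermitian_def by simp
  thus ?thesis using assms by simp
qed

lemma assoc5: assumes "A \<in> carrier_mat n n" "B \<in> carrier_mat n n" "C \<in> carrier_mat n n" "D \<in> carrier_mat n n"
  shows "A * (B * C * D) = A * B * C * (D :: 'a :: semiring_1 mat)"
proof -
  have "A * (B * C * D) = A * (B * C) * D" using assms by (intro assoc_mult_mat[symmetric], auto)
  also have "A * (B * C) = A * B * C" using assms by (intro assoc_mult_mat[symmetric], auto)
  finally show ?thesis .
qed

lemma assoc6: assumes "A \<in> carrier_mat n n" "B \<in> carrier_mat n n" "C \<in> carrier_mat n n" "D \<in> carrier_mat n n"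
   "E \<in> carrier_mat n n"
  shows "A * B * C * (D * E) = A * (B * C * D) * (E :: 'a :: semiring_1 mat)"
proof -
  have "A * B * C * (D * E) = A * B * C * D * E" using assms by (intro assoc_mult_mat[symmetric], auto)
  also have "A * B * C * D = A * (B * C * D)" using assoc5[OF assms(1-4)] by simp
  finally show ?thesis .
qed

lemma unitary_adjoint_mult: assumes "unitary n W" "A \<in> carrier_mat n n"
  shows "W * (mat_adjoint W * A * W) = A * W"
proof -
  have W: "W \<in> carrier_mat n n" and w: "W * mat_adjoint W = 1\<^sub>m n" using assms unfolding unitary_def by auto
  have "W * (mat_adjoint W * A * W) = W * mat_adjoint W * A * W"
    using W assms(2) by (simp add: assoc5)
  thus ?thesis using w assms(2) by simp
qed

lemma spectral_ex: "A \<in> carrier_mat n n \<Longrightarrow> hermitian A \<Longrightarrow>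
   \<exists>U D. unitary n U \<and> D \<in> carrier_mat n n \<and> diagonal_mat D \<and> mat_adjoint U * A * U = D"
proof (induction n arbitrary: A)
  case 0
  show ?case
    by (rule exI[of _ "1\<^sub>m 0"], rule exI[of _ A], insert 0, auto simp: unitary_def diagonal_mat_def)
next
  case (Suc n A)
  note A = Suc.prems(1)
  obtain es where es: "char_poly A = (\<Prod>a\<leftarrow>es. [:- a, 1:])" "length es = Suc n"
    using char_poly_factorized[OF A] by auto
  then obtain e es' where ees: "es = e # es'" by (cases es, auto)
  have "poly (char_poly A) e = 0" unfolding es ees by simp
  hence "eigenvalue A e" using eigenvalue_root_char_poly[OF A] by simp
  from find_eigenvector[OF A this] obtain v where ev: "eigenvector A v e" by blast
  hence v: "v \<in> carrier_vec (Suc n)" and v0: "v \<noteq> 0\<^sub>v (Suc n)" and Av: "A *\<^sub>v v = e \<cdot>\<^sub>v v"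
    unfolding eigenvector_def using A by auto
  define v1 where "v1 = nz v"
  have v1: "v1 \<in> carrier_vec (Suc n)" unfolding v1_def using v by simp
  have v10: "v1 \<noteq> 0\<^sub>v (Suc n)" unfolding v1_def using nz_nonzero[OF v v0] .
  have v11: "v1 \<bullet>c v1 = 1" unfolding v1_def using nz_unit[OF v v0] .
  have Av1: "A *\<^sub>v v1 = e \<cdot>\<^sub>v v1" unfolding v1_def nz_def
    using A v Av by (simp add: mult_mat_vec smult_smult_assoc mult.commute)
  interpret cof_vec_space "Suc n" "TYPE(complex)" .
  define b where "b = basis_completion v1"
  from basis_completion[OF v1 v10, folded b_def]
  have span_b: "span (set b) = carrier_vec (Suc n)" and dist_b: "distinct b" 
    and indep: "\<not> lin_dep (set b)" and b: "set b \<subseteq> carrier_vec (Suc n)" and hdb: "hd b = v1" 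
    and len_b: "length b = Suc n" by auto
  from hdb len_b obtain vs where bv: "b = v1 # vs" by (cases b, auto)
  define ws0 where "ws0 = gram_schmidt (Suc n) b"
  from gram_schmidt_result[OF b dist_b indep refl, folded ws0_def]
  have ws0: "set ws0 \<subseteq> carrier_vec (Suc n)" "corthogonal ws0" "length ws0 = Suc n" 
    by (auto simp: len_b)
  from gram_schmidt_hd[OF v1, of vs, folded bv] have hdws0: "hd ws0 = v1" unfolding ws0_def .
  define ws where "ws = map nz ws0"
  have wsc: "set ws \<subseteq> carrier_vec (Suc n)" and lws: "length ws = Suc n"
    unfolding ws_def using ws0 by auto
  have ws0i: "i < Suc n \<Longrightarrow> ws0 ! i \<in> carrier_vec (Suc n)" for i using ws0 by auto
  have ws0nz: "i < Suc n \<Longrightarrow> ws0 ! i \<noteq> 0\<^sub>v (Suc n)" for i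
    using corthogonalD[OF ws0(2), of i i] ws0 by auto
  have orthn: "i < Suc n \<Longrightarrow> j < Suc n \<Longrightarrow> ws ! i \<bullet>c ws ! j = (if i = j then 1 else 0)" for i j
  proof -
    assume i: "i < Suc n" and j: "j < Suc n"
    show ?thesis
    proof (cases "i = j")
      case True thus ?thesis unfolding ws_def using i ws0 nz_unit[OF ws0i[OF i] ws0nz[OF i]] by simp
    next
      case False
      hence "ws0 ! i \<bullet>c ws0 ! j = 0" using corthogonalD[OF ws0(2), of i j] ws0 i j by auto
      thus ?thesis unfolding ws_def using i j ws0 False nz_orth[OF ws0i[OF i] ws0i[OF j]] by simp
    qed
  qed
  have hdws: "hd ws = v1" unfolding ws_def using hdws0 ws0 nz_id[OF v1 v11]
    by (cases ws0, auto)
  have cws: "corthogonal ws"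
    by (rule corthogonalI, insert orthn lws, auto)
  define W where "W = mat_of_cols (Suc n) ws"
  have W: "W \<in> carrier_mat (Suc n) (Suc n)" unfolding W_def using lws by auto
  have Wi: "corthogonal_inv W = mat_adjoint W"
  proof -
    have "map vec_inv ws = map conjugate ws"
    proof (rule nth_equalityI)
      fix i assume "i < length (map vec_inv ws)"
      hence i: "i < Suc n" using lws by auto
      show "map vec_inv ws ! i = map conjugate ws ! i"
        using orthn[OF i i] i lws unfolding vec_inv_def by simp
    qed simp
    moreover have "corthogonal_inv W = mat_of_rows (Suc n) (map vec_inv ws)"
      unfolding corthogonal_inv_def W_def using wsc by simp
    moreover have "mat_adjoint W = mat_of_rows (Suc n) (map conjugate ws)"
      unfolding mat_adjoint_def W_def using wsc by simp
    ultimately show ?thesis by (simp only:)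
  qed
  have col0: "col (mat_adjoint W * A * W) 0 = vec (Suc n) (\<lambda> i. if i = 0 then e else 0)"
    using corthogonal_col_ev_0[OF A v1 v10 Av1 _ hdws wsc cws lws] unfolding W_def[symmetric] Wi by simp
  have WW: "mat_adjoint W * W = 1\<^sub>m (Suc n)"
  proof (rule eq_matI)
    fix i j assume "i < dim_row (1\<^sub>m (Suc n))" "j < dim_col (1\<^sub>m (Suc n) :: complex mat)"
    hence i: "i < Suc n" and j: "j < Suc n" by auto
    have "(mat_adjoint W * W) $$ (i,j) = (\<Sum>k<Suc n. cnj (W $$ (k,i)) * W $$ (k,j))"
      using W i j by (simp add: scalar_prod_def lessThan_atLeast0)
    also have "\<dots> = (\<Sum>k<Suc n. (ws ! j) $ k * cnj ((ws ! i) $ k))"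
      unfolding W_def using i j lws by (intro sum.cong, auto simp: mat_of_cols_index mult.commute)
    also have "\<dots> = ws ! j \<bullet>c ws ! i" 
      by (rule cprod_sum[symmetric], insert wsc lws i j, auto)
    also have "\<dots> = 1\<^sub>m (Suc n) $$ (i,j)" using orthn[OF j i] i j by auto
    finally show "(mat_adjoint W * W) $$ (i,j) = 1\<^sub>m (Suc n) $$ (i,j)" .
  qed (use W in auto)
  have WW2: "W * mat_adjoint W = 1\<^sub>m (Suc n)"
    by (rule mat_mult_left_right_inverse[OF _ W WW], insert W, auto)
  have uW: "unitary (Suc n) W" unfolding unitary_def using W WW WW2 by auto
  define A' where "A' = mat_adjoint W * A * W"
  have A': "A' \<in> carrier_mat (Suc n) (Suc n)" unfolding A'_def using W A by auto
  have hA': "hermitian A'"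
  proof -
    have "mat_adjoint A' = mat_adjoint W * mat_adjoint (mat_adjoint W * A)"
      unfolding A'_def using W A by (intro adj_mult, auto)
    also have "mat_adjoint (mat_adjoint W * A) = mat_adjoint A * W"
      using W A by (subst adj_mult, auto)
    also have "mat_adjoint W * (mat_adjoint A * W) = mat_adjoint W * mat_adjoint A * W"
      using W A by (intro assoc_mult_mat[symmetric], auto)
    finally have "mat_adjoint A' = mat_adjoint W * mat_adjoint A * W" .
    thus ?thesis using Suc.prems(2) unfolding hermitian_def A'_def by simp
  qed
  have A'c0: "i < Suc n \<Longrightarrow> A' $$ (i, 0) = (if i = 0 then e else 0)" for i
    using arg_cong[OF col0, of "\<lambda>x. x $ i"] A' unfolding A'_def[symmetric] by auto
  have A'r0: "j < Suc n \<Longrightarrow> A' $$ (0, j) = (if j = 0 then e else 0)" for j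
  proof -
    assume j: "j < Suc n"
    have "A' $$ (0, j) = cnj (A' $$ (j, 0))" by (rule hermitian_index[OF hA' A' _ j], simp)
    moreover have "e = cnj e" using hermitian_index[OF hA' A', of 0 0] A'c0[of 0] by simp
    ultimately show ?thesis using A'c0[OF j] by auto
  qed
  define A3 where "A3 = mat n n (\<lambda>(i,j). A' $$ (Suc i, Suc j))"
  have A3: "A3 \<in> carrier_mat n n" unfolding A3_def by simp
  have hA3: "hermitian A3" unfolding hermitian_def
  proof (rule eq_matI)
    fix i j assume "i < dim_row A3" "j < dim_col A3"
    hence i: "i < n" and j: "j < n" using A3 by auto
    have "mat_adjoint A3 $$ (i,j) = cnj (A' $$ (Suc j, Suc i))" using i j A3 by (simp add: A3_def)
    also have "\<dots> = A' $$ (Suc i, Suc j)" using hermitian_index[OF hA' A', of "Suc i" "Suc j"] i j by simp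
    also have "\<dots> = A3 $$ (i,j)" using i j by (simp add: A3_def)
    finally show "mat_adjoint A3 $$ (i,j) = A3 $$ (i,j)" .
  qed (use A3 in auto)
  define E where "E = mat 1 1 (\<lambda>_. e)"
  have E: "E \<in> carrier_mat 1 1" unfolding E_def by simp
  have A'b: "A' = four_block_mat E (0\<^sub>m 1 n) (0\<^sub>m n 1) A3"
  proof (rule eq_matI)
    fix i j assume "i < dim_row (four_block_mat E (0\<^sub>m 1 n) (0\<^sub>m n 1) A3)"
      "j < dim_col (four_block_mat E (0\<^sub>m 1 n) (0\<^sub>m n 1) A3)"
    hence i: "i < Suc n" and j: "j < Suc n" using E A3 by auto
    show "A' $$ (i,j) = four_block_mat E (0\<^sub>m 1 n) (0\<^sub>m n 1) A3 $$ (i,j)"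
    proof (cases "i = 0 \<or> j = 0")
      case True thus ?thesis using i j A'c0 A'r0 E A3 by (auto simp: E_def)
    next
      case False
      then obtain i' j' where "i = Suc i'" "j = Suc j'" by (cases i; cases j, auto)
      thus ?thesis using i j E A3 by (simp add: A3_def)
    qed
  qed (use A' E A3 in auto)
  from Suc.IH[OF A3 hA3] obtain U3 D3 where U3: "unitary n U3" and D3: "D3 \<in> carrier_mat n n"
    and dD3: "diagonal_mat D3" and UAU3: "mat_adjoint U3 * A3 * U3 = D3" by blast
  have U3c: "U3 \<in> carrier_mat n n" using U3 unfolding unitary_def by auto
  define U1 where "U1 = four_block_mat (1\<^sub>m 1) (0\<^sub>m 1 n) (0\<^sub>m n 1) U3"
  have U1: "unitary (Suc n) U1"
  proof -
    have 1: "mat_adjoint U1 * U1 = 1\<^sub>m (Suc n)" unfolding U1_def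
      using blk_adj[of "1\<^sub>m 1" U3 n] blk_mult[of "1\<^sub>m 1" "1\<^sub>m 1" "mat_adjoint U3" n U3] U3 U3c
      unfolding unitary_def by (simp del: four_block_one_mat add: four_block_one_mat[of 1 n, simplified])
    have 2: "U1 * mat_adjoint U1 = 1\<^sub>m (Suc n)" unfolding U1_def
      using blk_adj[of "1\<^sub>m 1" U3 n] blk_mult[of "1\<^sub>m 1" "1\<^sub>m 1" U3 n "mat_adjoint U3"] U3 U3c
      unfolding unitary_def by (simp del: four_block_one_mat add: four_block_one_mat[of 1 n, simplified])
    show ?thesis unfolding unitary_def using 1 2 U3c by (auto simp: U1_def)
  qed
  define U where "U = W * U1"
  have uU: "unitary (Suc n) U" unfolding U_def by (rule unitary_mult[OF uW U1])
  have U1c: "U1 \<in> carrier_mat (Suc n) (Suc n)" using U1 unfolding unitary_def by auto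
  define D where "D = four_block_mat E (0\<^sub>m 1 n) (0\<^sub>m n 1) D3"
  have DD: "mat_adjoint U * A * U = D"
  proof -
    have "mat_adjoint U * A * U = mat_adjoint U1 * (mat_adjoint W * A * W) * U1"
      unfolding U_def using W U1c A
      by (simp add: adj_mult assoc6[of _ "Suc n"])
    also have "\<dots> = mat_adjoint U1 * A' * U1" unfolding A'_def ..
    also have "\<dots> = D" 
    proof -
      have c: "mat_adjoint U3 * A3 \<in> carrier_mat n n" using U3c A3 by auto
      have e1: "mat_adjoint U1 * A' = four_block_mat E (0\<^sub>m 1 n) (0\<^sub>m n 1) (mat_adjoint U3 * A3)"
        unfolding A'b U1_def blk_adj[OF one_carrier_mat U3c] 
        using blk_mult[OF _ E adj_carrier[OF U3c] A3, of "1\<^sub>m 1"] E by simp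
      show ?thesis unfolding e1 unfolding U1_def D_def
        using blk_mult[OF E one_carrier_mat c U3c] E UAU3 by simp
    qed
    finally show ?thesis .
  qed
  have Dc: "D \<in> carrier_mat (Suc n) (Suc n)" unfolding D_def using E D3 by auto
  have dD: "diagonal_mat D" unfolding diagonal_mat_def D_def
    using dD3 E D3 unfolding diagonal_mat_def by (auto simp: E_def)
  show ?case using uU Dc dD DD by blast
qed

lemma sum_list_map_const_sub: "sum_list (map (\<lambda>x. x - t) ys) = sum_list ys - t * real (length ys)"
  by (induction ys, auto simp: algebra_simps)

lemma kf_thresh: fixes sl :: "real list" and k :: nat
  assumes srt: "sorted sl" and nn: "\<forall>x\<in>set sl. x \<ge> 0"
  defines "t \<equiv> (if k < length sl then sl ! (length sl - 1 - k) else 0)"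
  shows "sum_list (map (\<lambda>x. max (x - t) 0) sl) + t * real k = sum_list (take k (rev sl))" "t \<ge> 0"
proof -
  let ?L = "length sl"
  show "t \<ge> 0" unfolding t_def using nn nth_mem[of "length sl - Suc k" sl] by auto
  show "sum_list (map (\<lambda>x. max (x - t) 0) sl) + t * real k = sum_list (take k (rev sl))"
  proof (cases "k < ?L")
    case False
    hence t: "t = 0" unfolding t_def by simp
    have "map (\<lambda>x. max (x - t) 0) sl = sl" unfolding t using nn by (induction sl, auto)
    thus ?thesis using False t by simp
  next
    case True
    hence t: "t = sl ! (?L - 1 - k)" unfolding t_def by simp
    have tk: "take k (rev sl) = rev (drop (?L - k) sl)" by (simp add: take_rev)
    have split: "sl = take (?L - k) sl @ drop (?L - k) sl" by simp
    have low: "x \<le> t" if "x \<in> set (take (?L - k) sl)" for x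
    proof -
      from that obtain p where p: "p < length (take (?L - k) sl)" "x = take (?L - k) sl ! p"
        by (auto simp: in_set_conv_nth)
      hence "x = sl ! p" "p \<le> ?L - 1 - k" using True by auto
      thus ?thesis unfolding t using sorted_nth_mono[OF srt, of p "?L - 1 - k"] True by auto
    qed
    have high: "x \<ge> t" if "x \<in> set (drop (?L - k) sl)" for x
    proof -
      from that obtain p where p: "p < length (drop (?L - k) sl)" "x = drop (?L - k) sl ! p"
        by (auto simp: in_set_conv_nth)
      hence "x = sl ! (?L - k + p)" "?L - k + p < ?L" using True by auto
      thus ?thesis unfolding t using sorted_nth_mono[OF srt, of "?L - 1 - k" "?L - k + p"] True by auto
    qed
    have m1: "map (\<lambda>x. max (x - t) 0) (take (?L - k) sl) = map (\<lambda>x. 0) (take (?L - k) sl)"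
      using low by (intro map_cong, auto)
    have m2: "map (\<lambda>x. max (x - t) 0) (drop (?L - k) sl) = map (\<lambda>x. x - t) (drop (?L - k) sl)"
      using high by (intro map_cong, auto)
    have "sum_list (map (\<lambda>x. max (x - t) 0) sl) = 
       sum_list (map (\<lambda>x. max (x - t) 0) (take (?L - k) sl)) + sum_list (map (\<lambda>x. max (x - t) 0) (drop (?L - k) sl))"
      by (subst split, simp only: map_append sum_list_append)
    also have "\<dots> = sum_list (drop (?L - k) sl) - t * real k"
      unfolding m1 m2 sum_list_map_const_sub using True by simp
    finally show ?thesis unfolding tk by simp
  qed
qed

lemma kf_weight:
  fixes \<sigma> m :: "nat \<Rightarrow> real"
  assumes "M = image_mset \<sigma> (mset_set {..<N})"
    and nn: "\<And>i. i < N \<Longrightarrow> \<sigma> i \<ge> 0"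
    and m01: "\<And>i. i < N \<Longrightarrow> 0 \<le> m i \<and> m i \<le> 1"
    and msum: "(\<Sum>i<N. m i) \<le> real k"
  shows "(\<Sum>i<N. \<sigma> i * m i) \<le> sum_list (take k (rev (sorted_list_of_multiset M)))"
proof -
  define sl where "sl = sorted_list_of_multiset M"
  have srt: "sorted sl" unfolding sl_def by simp
  have msl: "mset sl = M" unfolding sl_def by simp
  have nnl: "\<forall>x\<in>set sl. x \<ge> 0"
  proof
    fix x assume "x \<in> set sl"
    hence "x \<in># M" using msl by (metis set_mset_mset)
    thus "x \<ge> 0" using nn unfolding assms(1) by auto
  qed
  define t where "t = (if k < length sl then sl ! (length sl - 1 - k) else 0)"
  note th = kf_thresh[OF srt nnl, of k, folded t_def]
  have pt: "\<sigma> i * m i \<le> max (\<sigma> i - t) 0 + t * m i" if i: "i < N" for i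
  proof (cases "\<sigma> i \<ge> t")
    case True
    have "\<sigma> i * m i = (\<sigma> i - t) * m i + t * m i" by (simp add: algebra_simps)
    also have "(\<sigma> i - t) * m i \<le> (\<sigma> i - t)" using True m01[OF i] by (simp add: mult_left_le)
    finally show ?thesis using True by simp
  next
    case False
    have "\<sigma> i * m i \<le> t * m i" using False m01[OF i] by (simp add: mult_right_mono)
    thus ?thesis by simp
  qed
  have "(\<Sum>i<N. \<sigma> i * m i) \<le> (\<Sum>i<N. max (\<sigma> i - t) 0 + t * m i)"
    by (rule sum_mono, rule pt, simp)
  also have "\<dots> = (\<Sum>i<N. max (\<sigma> i - t) 0) + t * (\<Sum>i<N. m i)"
    by (simp add: sum.distrib sum_distrib_left)
  also have "t * (\<Sum>i<N. m i) \<le> t * real k" using th(2) msum by (simp add: mult_left_mono)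
  also have "(\<Sum>i<N. max (\<sigma> i - t) 0) = sum_list (map (\<lambda>x. max (x - t) 0) sl)"
  proof -
    have "sum_list (map (\<lambda>x. max (x - t) 0) sl) = sum_mset (image_mset (\<lambda>x. max (x - t) 0) (mset sl))"
      by (metis mset_map sum_mset_sum_list)
    also have "\<dots> = (\<Sum>i<N. max (\<sigma> i - t) 0)"
      unfolding msl assms(1) by (simp add: sum_unfold_sum_mset image_mset.compositionality comp_def)
    finally show ?thesis by simp
  qed
  finally show ?thesis using th(1) unfolding sl_def by simp
qed

lemma gram_entry: assumes "X \<in> carrier_mat m n" "i < n" "j < n"
  shows "(mat_adjoint X * X) $$ (j,i) = col X i \<bullet>c col (X :: complex mat) j"
  using assms by (simp add: scalar_prod_def mult.commute)

lemma proots_lin: "proots (\<Prod>a\<leftarrow>xs. [:- a, 1:]) = mset (xs :: complex list)"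
proof (induction xs)
  case (Cons a xs)
  have "monic (\<Prod>a\<leftarrow>xs. [:- a, 1:])" by (rule monic_prod_list, auto)
  hence nz: "(\<Prod>a\<leftarrow>xs. [:- a, 1:]) \<noteq> 0" by auto
  show ?case using proots_mult[OF _ nz, of "[:- a, 1:]"] Cons by (simp add: proots_linear_factor)
qed simp

lemma svd_data: assumes B: "B \<in> carrier_mat N N"
  shows "\<exists>W lam. unitary N W \<and> (\<forall>i<N. lam i \<ge> 0) \<and>
     singular_values B = image_mset (\<lambda>i. sqrt (lam i)) (mset_set {..<N}) \<and>
     (\<forall>i<N. \<forall>j<N. (B *\<^sub>v col W i) \<bullet>c (B *\<^sub>v col W j) = (if i = j then complex_of_real (lam i) else 0))"
proof -
  define H where "H = mat_adjoint B * B"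
  have Hc: "H \<in> carrier_mat N N" unfolding H_def using B by auto
  have hH: "hermitian H" unfolding hermitian_def H_def using B by (simp add: adj_mult[of _ N N])
  from spectral_ex[OF Hc hH] obtain U D where U: "unitary N U" and Dc: "D \<in> carrier_mat N N"
    and dD: "diagonal_mat D" and UHU: "mat_adjoint U * H * U = D" by blast
  have Uc: "U \<in> carrier_mat N N" and u1: "mat_adjoint U * U = 1\<^sub>m N" and u2: "U * mat_adjoint U = 1\<^sub>m N"
    using U unfolding unitary_def by auto
  define X where "X = B * U"
  have Xc: "X \<in> carrier_mat N N" unfolding X_def using B Uc by auto
  have XX: "mat_adjoint X * X = D"
  proof -
    have "mat_adjoint X * X = mat_adjoint U * mat_adjoint B * (B * U)"
      unfolding X_def using B Uc by (simp add: adj_mult)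
    also have "\<dots> = mat_adjoint U * (mat_adjoint B * B) * U"
      by (rule assoc4[of _ N N _ N _ N _ N], insert B Uc, auto)
    finally show ?thesis using UHU unfolding H_def by simp
  qed
  define lam where "lam i = Re (D $$ (i,i))" for i
  have gram: "(B *\<^sub>v col U i) \<bullet>c (B *\<^sub>v col U j) = D $$ (j,i)" if "i < N" "j < N" for i j
  proof -
    have "col X i = B *\<^sub>v col U i" "col X j = B *\<^sub>v col U j" unfolding X_def using that B Uc by auto
    thus ?thesis using gram_entry[OF Xc that] XX by simp
  qed
  have Dii: "D $$ (i,i) = complex_of_real (lam i) \<and> lam i \<ge> 0" if i: "i < N" for i
  proof -
    have c: "B *\<^sub>v col U i \<in> carrier_vec N" using B Uc i by auto
    show ?thesis using cprod_self[OF c] gram[OF i i] unfolding lam_def by simp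
  qed
  have gr: "\<forall>i<N. \<forall>j<N. (B *\<^sub>v col U i) \<bullet>c (B *\<^sub>v col U j) = (if i = j then complex_of_real (lam i) else 0)"
    using gram Dii dD Dc unfolding diagonal_mat_def by auto
  have sim: "similar_mat H D"
  proof -
    have "U * D * mat_adjoint U = U * mat_adjoint U * H * (U * mat_adjoint U)"
      unfolding UHU[symmetric] using Uc Hc by (simp add: assoc6[of _ N])
    also have "\<dots> = H" using u2 Hc by simp
    finally have "H = U * D * mat_adjoint U" by simp
    hence "similar_mat_wit H D U (mat_adjoint U)"
      unfolding similar_mat_wit_def Let_def using Hc Dc Uc u1 u2 by auto
    thus ?thesis unfolding similar_mat_def by blast
  qed
  have ut: "upper_triangular D" using dD Dc unfolding diagonal_mat_def upper_triangular_def by auto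
  have "char_poly H = (\<Prod>a\<leftarrow>diag_mat D. [:- a, 1:])"
    using char_poly_similar[OF sim] char_poly_upper_triangular[OF Dc ut] by simp
  hence pr: "proots (char_poly H) = mset (diag_mat D)" by (simp add: proots_lin)
  have "mset (diag_mat D) = image_mset (\<lambda>i. D $$ (i,i)) (mset_set {..<N})"
    unfolding diag_mat_def using Dc by (simp add: mset_map mset_upt lessThan_atLeast0)
  hence "singular_values B = image_mset (\<lambda>i. sqrt (lam i)) (mset_set {..<N})"
    unfolding singular_values_def H_def[symmetric] pr lam_def by (simp add: image_mset.compositionality comp_def)
  thus ?thesis using U Dii gr by blast
qed

lemma cmod_sq_cnj: "z * cnj z = complex_of_real ((cmod z)^2)"
  using complex_norm_square by (simp add: mult.commute)

lemma bessel:
  fixes v :: "nat \<Rightarrow> nat \<Rightarrow> complex"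
  assumes fin: "finite I"
    and orth: "\<And>i j. i \<in> I \<Longrightarrow> j \<in> I \<Longrightarrow> (\<Sum>k<N. v i k * cnj (v j k)) = (if i = j then 1 else 0)"
    and c: "c < N"
  shows "(\<Sum>i\<in>I. (cmod (v i c))^2) \<le> 1"
proof -
  define s where "s = (\<Sum>i\<in>I. v i c * cnj (v i c))"
  have s: "s = complex_of_real (\<Sum>i\<in>I. (cmod (v i c))^2)" unfolding s_def cmod_sq_cnj by simp
  define y where "y k = (\<Sum>i\<in>I. cnj (v i c) * v i k)" for k
  define dl where "dl k = (if k = c then (1::complex) else 0)" for k
  have yc: "y c = s" unfolding y_def s_def by (simp add: mult.commute)
  have cs: "cnj s = s" using s complex_cnj_complex_of_real by metis
  have cyc: "cnj (y c) = s" using yc cs by simp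
  have yy: "(\<Sum>k<N. y k * cnj (y k)) = s"
  proof -
    have "(\<Sum>k<N. y k * cnj (y k)) = (\<Sum>k<N. \<Sum>i\<in>I. \<Sum>j\<in>I. cnj (v i c) * v j c * (v i k * cnj (v j k)))"
    proof (rule sum.cong[OF refl])
      fix k
      have "y k * cnj (y k) = (\<Sum>i\<in>I. \<Sum>j\<in>I. (cnj (v i c) * v i k) * cnj (cnj (v j c) * v j k))"
        unfolding y_def cnj_sum by (rule sum_product)
      also have "\<dots> = (\<Sum>i\<in>I. \<Sum>j\<in>I. cnj (v i c) * v j c * (v i k * cnj (v j k)))"
        by (intro sum.cong refl, simp add: algebra_simps)
      finally show "y k * cnj (y k) = (\<Sum>i\<in>I. \<Sum>j\<in>I. cnj (v i c) * v j c * (v i k * cnj (v j k)))" .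
    qed
    also have "\<dots> = (\<Sum>i\<in>I. \<Sum>j\<in>I. cnj (v i c) * v j c * (\<Sum>k<N. v i k * cnj (v j k)))"
      by (simp add: sum_distrib_left sum.swap[of _ "{..<N}"] )
    also have "\<dots> = (\<Sum>i\<in>I. \<Sum>j\<in>I. cnj (v i c) * v j c * (if i = j then 1 else 0))"
      by (intro sum.cong refl, simp add: orth)
    also have "\<dots> = (\<Sum>i\<in>I. cnj (v i c) * v i c)"
      by (simp add: fin if_distrib[of "\<lambda>x. _ * x"] cong: if_cong)
    also have "\<dots> = s" unfolding s_def by (simp add: mult.commute)
    finally show ?thesis .
  qed
  have d1: "(\<Sum>k<N. dl k * cnj (dl k)) = 1"
  proof -
    have "(\<Sum>k<N. dl k * cnj (dl k)) = (\<Sum>k<N. if k = c then 1 else 0)"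
      by (intro sum.cong, auto simp: dl_def)
    thus ?thesis using c by simp
  qed
  have d2: "(\<Sum>k<N. dl k * cnj (y k)) = cnj (y c)"
  proof -
    have "(\<Sum>k<N. dl k * cnj (y k)) = (\<Sum>k<N. if k = c then cnj (y k) else 0)"
      by (intro sum.cong, auto simp: dl_def)
    thus ?thesis using c by simp
  qed
  have d3: "(\<Sum>k<N. y k * cnj (dl k)) = y c"
  proof -
    have "(\<Sum>k<N. y k * cnj (dl k)) = (\<Sum>k<N. if k = c then y k else 0)"
      by (intro sum.cong, auto simp: dl_def)
    thus ?thesis using c by simp
  qed
  have "(\<Sum>k<N. (dl k - y k) * cnj (dl k - y k)) = 
     (\<Sum>k<N. dl k * cnj (dl k)) - (\<Sum>k<N. dl k * cnj (y k)) - (\<Sum>k<N. y k * cnj (dl k)) + (\<Sum>k<N. y k * cnj (y k))"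
    by (simp add: algebra_simps sum.distrib sum_subtractf)
  also have "\<dots> = 1 - s" unfolding d1 d2 d3 yy yc cs by simp
  finally have e: "(\<Sum>k<N. (dl k - y k) * cnj (dl k - y k)) = 1 - s" .
  have "(\<Sum>k<N. (dl k - y k) * cnj (dl k - y k)) = complex_of_real (\<Sum>k<N. (cmod (dl k - y k))^2)"
    unfolding cmod_sq_cnj by simp
  hence "complex_of_real (\<Sum>k<N. (cmod (dl k - y k))^2) = complex_of_real (1 - (\<Sum>i\<in>I. (cmod (v i c))^2))"
    using e s by simp
  hence "(\<Sum>k<N. (cmod (dl k - y k))^2) = 1 - (\<Sum>i\<in>I. (cmod (v i c))^2)" using of_real_eq_iff by blast
  moreover have "(\<Sum>k<N. (cmod (dl k - y k))^2) \<ge> 0" by (rule sum_nonneg, simp)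
  ultimately show ?thesis by linarith
qed

lemma sum_cmod_sq: "(\<Sum>k\<in>K. f k * cnj (f k)) = complex_of_real (\<Sum>k\<in>K. (cmod (f k))^2)"
  unfolding cmod_sq_cnj by simp

lemma svd_facts: assumes B: "B \<in> carrier_mat N N"
  obtains W lam where "unitary N W" "\<And>i. i < N \<Longrightarrow> lam i \<ge> 0"
    "singular_values B = image_mset (\<lambda>i. sqrt (lam i)) (mset_set {..<N})"
    "\<And>c r. c < N \<Longrightarrow> r < N \<Longrightarrow> B $$ (c,r) = (\<Sum>i<N. (B *\<^sub>v col W i) $ c * cnj (W $$ (r,i)))"
    "\<And>i. i < N \<Longrightarrow> (\<Sum>r<N. (cmod (W $$ (r,i)))^2) = 1"
    "\<And>r. r < N \<Longrightarrow> (\<Sum>i<N. (cmod (W $$ (r,i)))^2) = 1"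
    "\<And>i. i < N \<Longrightarrow> (\<Sum>c<N. (cmod ((B *\<^sub>v col W i) $ c))^2) = lam i"
    "\<And>c. c < N \<Longrightarrow> (\<Sum>i\<in>{i. i < N \<and> lam i > 0}. (cmod ((B *\<^sub>v col W i) $ c))^2 / lam i) \<le> 1"
    "\<And>i c. i < N \<Longrightarrow> c < N \<Longrightarrow> (B *\<^sub>v col W i) $ c = (\<Sum>b<N. B $$ (c,b) * W $$ (b,i))"
proof -
  from svd_data[OF B] obtain W lam where U: "unitary N W" and lam0: "\<forall>i<N. lam i \<ge> 0"
    and sv: "singular_values B = image_mset (\<lambda>i. sqrt (lam i)) (mset_set {..<N})"
    and gr: "\<forall>i<N. \<forall>j<N. (B *\<^sub>v col W i) \<bullet>c (B *\<^sub>v col W j) = (if i = j then complex_of_real (lam i) else 0)"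
    by blast
  have Wc: "W \<in> carrier_mat N N" and w1: "mat_adjoint W * W = 1\<^sub>m N" and w2: "W * mat_adjoint W = 1\<^sub>m N"
    using U unfolding unitary_def by auto
  define u where "u i = B *\<^sub>v col W i" for i
  have uc: "u i \<in> carrier_vec N" for i unfolding u_def using B by (intro carrier_vecI, simp)
  have F6: "u i $ c = (\<Sum>b<N. B $$ (c,b) * W $$ (b,i))" if "i < N" "c < N" for i c
    unfolding u_def using that B Wc by (simp add: scalar_prod_def lessThan_atLeast0)
  have F1: "B $$ (c,r) = (\<Sum>i<N. u i $ c * cnj (W $$ (r,i)))" if "c < N" "r < N" for c r
  proof -
    have "B * W * mat_adjoint W = B * (W * mat_adjoint W)" by (rule assoc_mult_mat[OF B Wc adj_carrier[OF Wc]])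
    hence "B = B * W * mat_adjoint W" using B w2 by simp
    hence "B $$ (c,r) = (B * W * mat_adjoint W) $$ (c,r)" by simp
    also have "\<dots> = (\<Sum>i<N. (B * W) $$ (c,i) * cnj (W $$ (r,i)))"
      using that B Wc by (simp add: scalar_prod_def lessThan_atLeast0)
    also have "\<dots> = (\<Sum>i<N. u i $ c * cnj (W $$ (r,i)))"
      by (intro sum.cong refl, insert that B Wc, simp add: u_def)
    finally show ?thesis .
  qed
  have F2: "(\<Sum>r<N. (cmod (W $$ (r,i)))^2) = 1" if i: "i < N" for i
  proof -
    have "(mat_adjoint W * W) $$ (i,i) = (\<Sum>r<N. W $$ (r,i) * cnj (W $$ (r,i)))"
      using i Wc by (simp add: scalar_prod_def lessThan_atLeast0 mult.commute)
    hence "complex_of_real (\<Sum>r<N. (cmod (W $$ (r,i)))^2) = 1" using w1 i unfolding sum_cmod_sq by simp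
    thus ?thesis using of_real_eq_1_iff by blast
  qed
  have F3: "(\<Sum>i<N. (cmod (W $$ (r,i)))^2) = 1" if r: "r < N" for r
  proof -
    have "(W * mat_adjoint W) $$ (r,r) = (\<Sum>i<N. W $$ (r,i) * cnj (W $$ (r,i)))"
      using r Wc by (simp add: scalar_prod_def lessThan_atLeast0)
    hence "complex_of_real (\<Sum>i<N. (cmod (W $$ (r,i)))^2) = 1" using w2 r unfolding sum_cmod_sq by simp
    thus ?thesis using of_real_eq_1_iff by blast
  qed
  have F4: "(\<Sum>c<N. (cmod (u i $ c))^2) = lam i" if i: "i < N" for i
  proof -
    have "u i \<bullet>c u i = (\<Sum>c<N. u i $ c * cnj (u i $ c))" using cprod_sum[OF uc uc] .
    hence "complex_of_real (\<Sum>c<N. (cmod (u i $ c))^2) = complex_of_real (lam i)"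
      using gr i unfolding sum_cmod_sq u_def by simp
    thus ?thesis using of_real_eq_iff by blast
  qed
  have F5: "(\<Sum>i\<in>{i. i < N \<and> lam i > 0}. (cmod (u i $ c))^2 / lam i) \<le> 1" if c: "c < N" for c
  proof -
    define v where "v i k = u i $ k / complex_of_real (sqrt (lam i))" for i k
    have orth: "(\<Sum>k<N. v i k * cnj (v j k)) = (if i = j then 1 else 0)"
      if "i \<in> {i. i < N \<and> lam i > 0}" "j \<in> {i. i < N \<and> lam i > 0}" for i j
    proof -
      have "(\<Sum>k<N. v i k * cnj (v j k)) = (\<Sum>k<N. u i $ k * cnj (u j $ k)) / 
          (complex_of_real (sqrt (lam i)) * complex_of_real (sqrt (lam j)))"
        unfolding v_def by (simp add: sum_divide_distrib)
      also have "(\<Sum>k<N. u i $ k * cnj (u j $ k)) = u i \<bullet>c u j" using cprod_sum[OF uc uc] by simp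
      also have "\<dots> = (if i = j then complex_of_real (lam i) else 0)" using gr that unfolding u_def by auto
      finally show ?thesis using that 
        by (auto simp del: of_real_mult simp add: of_real_mult[symmetric])
    qed
    have "(\<Sum>i\<in>{i. i < N \<and> lam i > 0}. (cmod (v i c))^2) \<le> 1"
      by (rule bessel[OF _ orth c], auto)
    moreover have "(cmod (v i c))^2 = (cmod (u i $ c))^2 / lam i" if "i \<in> {i. i < N \<and> lam i > 0}" for i
      using that unfolding v_def by (simp add: norm_divide power_divide)
    ultimately show ?thesis by simp
  qed
  show ?thesis
    by (rule that[OF U _ sv F1[unfolded u_def] F2 F3 F4[unfolded u_def] F5[unfolded u_def] F6[unfolded u_def]],
      insert lam0, auto)
qed

lemma amgm: fixes x y s :: real assumes s: "s > 0"
  shows "x * y \<le> (x^2 / s + s * y^2) / 2"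
proof -
  have h: "0 \<le> (x - s*y)^2" by simp
  hence h2: "(2*(x*y)) * s \<le> x^2 + s^2*y^2" by (simp add: power2_eq_square algebra_simps)
  have e: "x^2/s + s*y^2 = (x^2 + s^2*y^2)/s" using s by (simp add: field_simps power2_eq_square)
  have "2*(x*y) \<le> (x^2 + s^2*y^2)/s" using s h2 by (simp add: pos_le_divide_eq)
  thus ?thesis unfolding e by simp
qed

lemma sum_inj_le: fixes f :: "nat \<Rightarrow> real"
  assumes "finite S" "inj_on g S" "\<forall>s\<in>S. g s < N" "\<And>c. f c \<ge> 0"
  shows "(\<Sum>s\<in>S. f (g s)) \<le> (\<Sum>c<N. f c)"
proof -
  have "(\<Sum>s\<in>S. f (g s)) = (\<Sum>c\<in>g ` S. f c)" using sum.reindex[OF assms(2), of f] by (simp add: comp_def)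
  also have "\<dots> \<le> (\<Sum>c<N. f c)" by (rule sum_mono2, insert assms, auto)
  finally show ?thesis .
qed

lemma kf_bound:
  fixes B :: "complex mat" and S :: "'s set" and rr cc :: "'s \<Rightarrow> nat" and z :: "'s \<Rightarrow> complex"
  assumes B: "B \<in> carrier_mat N N" and fin: "finite S" and irr: "inj_on rr S" and icc: "inj_on cc S"
    and rng: "\<forall>s\<in>S. rr s < N \<and> cc s < N" and zb: "\<forall>s\<in>S. cmod (z s) \<le> 1" and cS: "card S \<le> k"
  shows "cmod (\<Sum>s\<in>S. z s * B $$ (cc s, rr s)) \<le> ky_fan_norm k B"
proof -
  obtain W lam where U: "unitary N W" and lam0: "\<And>i. i < N \<Longrightarrow> lam i \<ge> 0"
    and sv: "singular_values B = image_mset (\<lambda>i. sqrt (lam i)) (mset_set {..<N})"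
    and F1: "\<And>c r. c < N \<Longrightarrow> r < N \<Longrightarrow> B $$ (c,r) = (\<Sum>i<N. (B *\<^sub>v col W i) $ c * cnj (W $$ (r,i)))"
    and F2: "\<And>i. i < N \<Longrightarrow> (\<Sum>r<N. (cmod (W $$ (r,i)))^2) = 1"
    and F3: "\<And>r. r < N \<Longrightarrow> (\<Sum>i<N. (cmod (W $$ (r,i)))^2) = 1"
    and F4: "\<And>i. i < N \<Longrightarrow> (\<Sum>c<N. (cmod ((B *\<^sub>v col W i) $ c))^2) = lam i"
    and F5: "\<And>c. c < N \<Longrightarrow> (\<Sum>i\<in>{i. i < N \<and> lam i > 0}. (cmod ((B *\<^sub>v col W i) $ c))^2 / lam i) \<le> 1"
    and F6: "\<And>i c. i < N \<Longrightarrow> c < N \<Longrightarrow> (B *\<^sub>v col W i) $ c = (\<Sum>b<N. B $$ (c,b) * W $$ (b,i))"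
    by (rule svd_facts[OF B], rule that, assumption+)
  define u where "u i c = (B *\<^sub>v col W i) $ c" for i c
  define w where "w r i = W $$ (r,i)" for r i
  define \<sigma> where "\<sigma> i = sqrt (lam i)" for i
  define a where "a i = (\<Sum>s\<in>S. (cmod (u i (cc s)))^2)" for i
  define b where "b i = (\<Sum>s\<in>S. (cmod (w (rr s) i))^2)" for i
  define m where "m i = (if lam i > 0 then (a i / lam i + b i) / 2 else 0)" for i
  have step1: "(\<Sum>s\<in>S. z s * B $$ (cc s, rr s)) = (\<Sum>i<N. \<Sum>s\<in>S. z s * (u i (cc s) * cnj (w (rr s) i)))"
  proof -
    have "(\<Sum>s\<in>S. z s * B $$ (cc s, rr s)) = (\<Sum>s\<in>S. \<Sum>i<N. z s * (u i (cc s) * cnj (w (rr s) i)))"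
      by (intro sum.cong refl, insert rng, simp add: F1 u_def w_def sum_distrib_left)
    also have "\<dots> = (\<Sum>i<N. \<Sum>s\<in>S. z s * (u i (cc s) * cnj (w (rr s) i)))" by (rule sum.swap)
    finally show ?thesis .
  qed
  have step2: "cmod (\<Sum>s\<in>S. z s * B $$ (cc s, rr s)) \<le> (\<Sum>i<N. \<Sum>s\<in>S. cmod (u i (cc s)) * cmod (w (rr s) i))"
  proof -
    have "cmod (\<Sum>s\<in>S. z s * B $$ (cc s, rr s)) \<le> (\<Sum>i<N. cmod (\<Sum>s\<in>S. z s * (u i (cc s) * cnj (w (rr s) i))))"
      unfolding step1 by (rule norm_sum)
    also have "\<dots> \<le> (\<Sum>i<N. \<Sum>s\<in>S. cmod (u i (cc s)) * cmod (w (rr s) i))"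
    proof (rule sum_mono)
      fix i
      have "cmod (\<Sum>s\<in>S. z s * (u i (cc s) * cnj (w (rr s) i))) \<le> (\<Sum>s\<in>S. cmod (z s * (u i (cc s) * cnj (w (rr s) i))))"
        by (rule norm_sum)
      also have "\<dots> \<le> (\<Sum>s\<in>S. cmod (u i (cc s)) * cmod (w (rr s) i))"
      proof (rule sum_mono)
        fix s assume s: "s \<in> S"
        have "cmod (z s * (u i (cc s) * cnj (w (rr s) i))) = cmod (z s) * (cmod (u i (cc s)) * cmod (w (rr s) i))"
          by (simp add: norm_mult)
        also have "\<dots> \<le> 1 * (cmod (u i (cc s)) * cmod (w (rr s) i))"
          by (rule mult_right_mono, insert zb s, auto)
        finally show "cmod (z s * (u i (cc s) * cnj (w (rr s) i))) \<le> cmod (u i (cc s)) * cmod (w (rr s) i)" by simp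
      qed
      finally show "cmod (\<Sum>s\<in>S. z s * (u i (cc s) * cnj (w (rr s) i))) \<le> (\<Sum>s\<in>S. cmod (u i (cc s)) * cmod (w (rr s) i))" .
    qed
    finally show ?thesis .
  qed
  have step3: "(\<Sum>s\<in>S. cmod (u i (cc s)) * cmod (w (rr s) i)) \<le> \<sigma> i * m i" if i: "i < N" for i
  proof (cases "lam i > 0")
    case True
    hence sp: "\<sigma> i > 0" unfolding \<sigma>_def by simp
    have "(\<Sum>s\<in>S. cmod (u i (cc s)) * cmod (w (rr s) i)) \<le> 
        (\<Sum>s\<in>S. ((cmod (u i (cc s)))^2 / \<sigma> i + \<sigma> i * (cmod (w (rr s) i))^2) / 2)"
      by (rule sum_mono, rule amgm[OF sp])
    also have "\<dots> = ((\<Sum>s\<in>S. (cmod (u i (cc s)))^2 / \<sigma> i) + (\<Sum>s\<in>S. \<sigma> i * (cmod (w (rr s) i))^2)) / 2"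
      by (subst sum_divide_distrib[symmetric], subst sum.distrib, rule refl)
    also have "\<dots> = (a i / \<sigma> i + \<sigma> i * b i) / 2"
      unfolding a_def b_def by (simp add: sum_divide_distrib sum_distrib_left)
    also have "\<dots> = \<sigma> i * m i"
    proof -
      have "\<sigma> i * \<sigma> i = lam i" unfolding \<sigma>_def using True by simp
      thus ?thesis unfolding m_def using True sp by (simp add: field_simps)
    qed
    finally show ?thesis .
  next
    case False
    hence l0: "lam i = 0" using lam0[OF i] by simp
    have "\<forall>c\<in>{..<N}. (cmod (u i c))^2 = 0"
      using F4[OF i] l0 unfolding u_def by (subst sum_nonneg_eq_0_iff[symmetric], auto)
    hence "\<forall>s\<in>S. u i (cc s) = 0" using rng by auto
    hence "(\<Sum>s\<in>S. cmod (u i (cc s)) * cmod (w (rr s) i)) = 0" by simp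
    thus ?thesis unfolding m_def using False by simp
  qed
  have aleq: "a i \<le> lam i" if i: "i < N" for i
  proof -
    have "a i \<le> (\<Sum>c<N. (cmod (u i c))^2)" unfolding a_def
      by (rule sum_inj_le[OF fin icc], insert rng, auto)
    thus ?thesis using F4[OF i] unfolding u_def by simp
  qed
  have bleq: "b i \<le> 1" if i: "i < N" for i
  proof -
    have "b i \<le> (\<Sum>r<N. (cmod (w r i))^2)" unfolding b_def
      by (rule sum_inj_le[OF fin irr, where f="\<lambda>r. (cmod (w r i))^2"], insert rng, auto)
    thus ?thesis using F2[OF i] unfolding w_def by simp
  qed
  have a0: "a i \<ge> 0" for i unfolding a_def by (rule sum_nonneg, simp)
  have b0: "b i \<ge> 0" for i unfolding b_def by (rule sum_nonneg, simp)
  have m01: "0 \<le> m i \<and> m i \<le> 1" if i: "i < N" for i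
  proof (cases "lam i > 0")
    case True
    have h: "a i / lam i \<le> 1" using aleq[OF i] True by simp
    have h0: "a i / lam i \<ge> 0" using a0[of i] True by simp
    have "m i = (a i / lam i + b i) / 2" using True by (simp add: m_def)
    moreover have "\<And>x y :: real. 0 \<le> x \<Longrightarrow> x \<le> 1 \<Longrightarrow> 0 \<le> y \<Longrightarrow> y \<le> 1 \<Longrightarrow> 0 \<le> (x+y)/2 \<and> (x+y)/2 \<le> 1"
      by auto
    ultimately show ?thesis using h h0 bleq[OF i] b0[of i] by metis
  qed (simp add: m_def)
  have msum: "(\<Sum>i<N. m i) \<le> real k"
  proof -
    let ?P = "{i. i < N \<and> lam i > 0}"
    have "(\<Sum>i<N. m i) \<le> (\<Sum>i<N. ((if lam i > 0 then a i / lam i else 0) + b i) / 2)"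
      by (rule sum_mono, simp add: m_def b0)
    also have "\<dots> = ((\<Sum>i<N. (if lam i > 0 then a i / lam i else 0)) + (\<Sum>i<N. b i)) / 2"
      by (subst sum_divide_distrib[symmetric], subst sum.distrib, rule refl)
    also have "(\<Sum>i<N. (if lam i > 0 then a i / lam i else 0)) = (\<Sum>i\<in>?P. a i / lam i)"
      by (simp add: sum.If_cases lessThan_def Collect_conj_eq[symmetric] conj_commute)
    also have "\<dots> = (\<Sum>s\<in>S. \<Sum>i\<in>?P. (cmod (u i (cc s)))^2 / lam i)"
      unfolding a_def by (simp add: sum_divide_distrib sum.swap[of _ ?P S])
    also have "\<dots> \<le> (\<Sum>s\<in>S. 1)"
      by (rule sum_mono, insert rng F5, auto simp: u_def)
    also have "(\<Sum>i<N. b i) = (\<Sum>s\<in>S. \<Sum>i<N. (cmod (w (rr s) i))^2)"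
      unfolding b_def by (rule sum.swap)
    also have "\<dots> = (\<Sum>s\<in>S. 1)"
      by (intro sum.cong refl, insert rng F3, auto simp: w_def)
    finally have "(\<Sum>i<N. m i) \<le> real (card S)" by simp
    thus ?thesis using cS by linarith
  qed
  have "(\<Sum>i<N. \<sigma> i * m i) \<le> ky_fan_norm k B"
    unfolding ky_fan_norm_def
    by (rule kf_weight[OF sv[folded \<sigma>_def]], insert lam0 m01 msum, auto simp: \<sigma>_def)
  moreover have "(\<Sum>i<N. \<Sum>s\<in>S. cmod (u i (cc s)) * cmod (w (rr s) i)) \<le> (\<Sum>i<N. \<sigma> i * m i)"
    by (rule sum_mono, rule step3, simp)
  ultimately show ?thesis using step2 by linarith
qed

lemma tn_attain: assumes B: "B \<in> carrier_mat N N"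
  obtains T where "\<And>a b. a < N \<Longrightarrow> b < N \<Longrightarrow> cmod (T b a) \<le> 1"
    "(\<Sum>a<N. \<Sum>b<N. T b a * B $$ (a,b)) = complex_of_real (trace_norm B)"
proof -
  obtain W lam where U: "unitary N W" and lam0: "\<And>i. i < N \<Longrightarrow> lam i \<ge> 0"
    and sv: "singular_values B = image_mset (\<lambda>i. sqrt (lam i)) (mset_set {..<N})"
    and F1: "\<And>c r. c < N \<Longrightarrow> r < N \<Longrightarrow> B $$ (c,r) = (\<Sum>i<N. (B *\<^sub>v col W i) $ c * cnj (W $$ (r,i)))"
    and F2: "\<And>i. i < N \<Longrightarrow> (\<Sum>r<N. (cmod (W $$ (r,i)))^2) = 1"
    and F3: "\<And>r. r < N \<Longrightarrow> (\<Sum>i<N. (cmod (W $$ (r,i)))^2) = 1"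
    and F4: "\<And>i. i < N \<Longrightarrow> (\<Sum>c<N. (cmod ((B *\<^sub>v col W i) $ c))^2) = lam i"
    and F5: "\<And>c. c < N \<Longrightarrow> (\<Sum>i\<in>{i. i < N \<and> lam i > 0}. (cmod ((B *\<^sub>v col W i) $ c))^2 / lam i) \<le> 1"
    and F6: "\<And>i c. i < N \<Longrightarrow> c < N \<Longrightarrow> (B *\<^sub>v col W i) $ c = (\<Sum>b<N. B $$ (c,b) * W $$ (b,i))"
    by (rule svd_facts[OF B], rule that, assumption+)
  define u where "u i c = (B *\<^sub>v col W i) $ c" for i c
  define w where "w r i = W $$ (r,i)" for r i
  define \<sigma> where "\<sigma> i = sqrt (lam i)" for i
  define P where "P = {i. i < N \<and> lam i > 0}"
  have finP: "finite P" unfolding P_def by simp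
  have sP: "\<sigma> i > 0" if "i \<in> P" for i using that unfolding P_def \<sigma>_def by simp
  define T where "T b a = (\<Sum>i\<in>P. w b i * cnj (u i a) / complex_of_real (\<sigma> i))" for b a
  have bound: "cmod (T b a) \<le> 1" if a: "a < N" and b: "b < N" for a b
  proof -
    have "cmod (T b a) \<le> (\<Sum>i\<in>P. cmod (w b i * cnj (u i a) / complex_of_real (\<sigma> i)))"
      unfolding T_def by (rule norm_sum)
    also have "\<dots> = (\<Sum>i\<in>P. cmod (w b i) * (cmod (u i a) / \<sigma> i))"
    proof (intro sum.cong refl)
      fix i assume "i \<in> P"
      hence "\<sigma> i > 0" by (rule sP)
      thus "cmod (w b i * cnj (u i a) / complex_of_real (\<sigma> i)) = cmod (w b i) * (cmod (u i a) / \<sigma> i)"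
        by (simp add: norm_mult norm_divide)
    qed
    also have "\<dots> \<le> (\<Sum>i\<in>P. ((cmod (w b i))^2 / 1 + 1 * (cmod (u i a) / \<sigma> i)^2) / 2)"
      by (rule sum_mono, rule amgm, simp)
    also have "\<dots> = ((\<Sum>i\<in>P. (cmod (w b i))^2) + (\<Sum>i\<in>P. (cmod (u i a))^2 / lam i)) / 2"
    proof -
      have "(\<Sum>i\<in>P. ((cmod (w b i))^2 / 1 + 1 * (cmod (u i a) / \<sigma> i)^2) / 2)
         = (\<Sum>i\<in>P. ((cmod (w b i))^2 + (cmod (u i a))^2 / lam i) / 2)"
        by (intro sum.cong refl, insert lam0, auto simp: \<sigma>_def P_def power_divide)
      also have "\<dots> = ((\<Sum>i\<in>P. (cmod (w b i))^2) + (\<Sum>i\<in>P. (cmod (u i a))^2 / lam i)) / 2"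
        by (subst sum_divide_distrib[symmetric], subst sum.distrib, rule refl)
      finally show ?thesis .
    qed
    also have "(\<Sum>i\<in>P. (cmod (w b i))^2) \<le> (\<Sum>i<N. (cmod (w b i))^2)"
      by (rule sum_mono2, auto simp: P_def)
    also have "\<dots> = 1" using F3[OF b] unfolding w_def .
    also have "(\<Sum>i\<in>P. (cmod (u i a))^2 / lam i) \<le> 1" using F5[OF a] unfolding P_def u_def .
    finally show ?thesis by simp
  qed
  have tr: "(\<Sum>a<N. \<Sum>b<N. T b a * B $$ (a,b)) = complex_of_real (trace_norm B)"
  proof -
    have "(\<Sum>a<N. \<Sum>b<N. T b a * B $$ (a,b)) = (\<Sum>a<N. \<Sum>b<N. \<Sum>i\<in>P. w b i * cnj (u i a) / complex_of_real (\<sigma> i) * B $$ (a,b))"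
      unfolding T_def by (simp add: sum_distrib_right)
    also have "\<dots> = (\<Sum>i\<in>P. \<Sum>a<N. \<Sum>b<N. w b i * cnj (u i a) / complex_of_real (\<sigma> i) * B $$ (a,b))"
      by (simp add: sum.swap[of _ P])
    also have "\<dots> = (\<Sum>i\<in>P. complex_of_real (\<sigma> i))"
    proof (rule sum.cong[OF refl])
      fix i assume iP: "i \<in> P"
      hence i: "i < N" and li: "lam i > 0" unfolding P_def by auto
      have "(\<Sum>a<N. \<Sum>b<N. w b i * cnj (u i a) / complex_of_real (\<sigma> i) * B $$ (a,b))
          = (\<Sum>a<N. cnj (u i a) * (\<Sum>b<N. B $$ (a,b) * w b i)) / complex_of_real (\<sigma> i)"
        by (simp add: sum_distrib_left sum_divide_distrib mult_ac)
      also have "\<dots> = (\<Sum>a<N. u i a * cnj (u i a)) / complex_of_real (\<sigma> i)"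
        by (intro arg_cong[of _ _ "\<lambda>x. x / _"] sum.cong refl, simp add: F6[OF i] u_def w_def mult.commute)
      also have "\<dots> = complex_of_real (lam i) / complex_of_real (\<sigma> i)"
        unfolding sum_cmod_sq using F4[OF i] unfolding u_def by simp
      also have "\<dots> = complex_of_real (\<sigma> i)"
      proof -
        have "lam i / \<sigma> i = \<sigma> i" unfolding \<sigma>_def using li by (simp add: real_div_sqrt)
        thus ?thesis by (metis of_real_divide)
      qed
      finally show "(\<Sum>a<N. \<Sum>b<N. w b i * cnj (u i a) / complex_of_real (\<sigma> i) * B $$ (a,b)) = complex_of_real (\<sigma> i)" .
    qed
    also have "\<dots> = complex_of_real (\<Sum>i\<in>P. \<sigma> i)" by simp
    also have "(\<Sum>i\<in>P. \<sigma> i) = (\<Sum>i<N. \<sigma> i)"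
      by (rule sum.mono_neutral_left, insert lam0, auto simp: P_def \<sigma>_def less_le)
    also have "\<dots> = trace_norm B" unfolding trace_norm_def sv \<sigma>_def
      by (simp add: sum_unfold_sum_mset)
    finally show ?thesis .
  qed
  show ?thesis by (rule that[OF bound tr], auto)
qed

definition dg :: "nat \<Rightarrow> (nat \<Rightarrow> complex) \<Rightarrow> complex mat" where
  "dg N g = mat N N (\<lambda>(i,k). if i = k then g i else 0)"

lemma dg_carrier[simp]: "dg N g \<in> carrier_mat N N" unfolding dg_def by simp

lemma mult_dg_right: assumes "Z \<in> carrier_mat N N" "a < N" "b < N"
  shows "(Z * dg N g) $$ (a,b) = Z $$ (a,b) * g b"
proof -
  have "(Z * dg N g) $$ (a,b) = (\<Sum>k<N. Z $$ (a,k) * (if k = b then g k else 0))"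
    using assms by (simp add: dg_def scalar_prod_def lessThan_atLeast0)
  also have "\<dots> = (\<Sum>k<N. if k = b then Z $$ (a,b) * g b else 0)"
    by (intro sum.cong refl, auto)
  also have "\<dots> = Z $$ (a,b) * g b" using assms by simp
  finally show ?thesis .
qed

lemma mult_dg_left: assumes "Z \<in> carrier_mat N N" "a < N" "b < N"
  shows "(dg N g * Z) $$ (a,b) = g a * Z $$ (a,b)"
proof -
  have "(dg N g * Z) $$ (a,b) = (\<Sum>k<N. (if a = k then g a else 0) * Z $$ (k,b))"
    using assms by (simp add: dg_def scalar_prod_def lessThan_atLeast0)
  also have "\<dots> = (\<Sum>k<N. if a = k then g a * Z $$ (a,b) else 0)"
    by (intro sum.cong refl, auto)
  also have "\<dots> = g a * Z $$ (a,b)" using assms by simp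
  finally show ?thesis .
qed

lemma Pi_dg: "Pi_proj d c = dg (d*d) (\<lambda>i. if Lval d i = c then 1 else 0)"
  unfolding Pi_proj_def dg_def by (rule eq_matI, auto)

lemma L_dg: "L_AB d = dg (d*d) (\<lambda>i. of_nat (Lval d i))"
  unfolding L_AB_def dg_def by (rule eq_matI, auto)

lemma comm_L_entry: assumes V: "V \<in> carrier_mat (d*d) (d*d)" and c: "V * L_AB d = L_AB d * V"
  and ab: "a < d*d" "b < d*d" and ne: "Lval d a \<noteq> Lval d b"
  shows "V $$ (a,b) = 0"
proof -
  have "(V * L_AB d) $$ (a,b) = (L_AB d * V) $$ (a,b)" using c by simp
  hence "V $$ (a,b) * of_nat (Lval d b) = of_nat (Lval d a) * V $$ (a,b)"
    unfolding L_dg using mult_dg_right[OF V ab] mult_dg_left[OF V ab] by simp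
  hence "V $$ (a,b) * (of_nat (Lval d b) - of_nat (Lval d a)) = 0" by (simp add: algebra_simps)
  thus ?thesis using ne by simp
qed

lemma comm_Pi: assumes Z: "Z \<in> carrier_mat (d*d) (d*d)"
  and z: "\<And>a b. a < d*d \<Longrightarrow> b < d*d \<Longrightarrow> Lval d a \<noteq> Lval d b \<Longrightarrow> Z $$ (a,b) = 0"
  shows "Z * Pi_proj d c = Pi_proj d c * Z"
proof (rule eq_matI)
  fix a b assume "a < dim_row (Pi_proj d c * Z)" "b < dim_col (Pi_proj d c * Z)"
  hence ab: "a < d*d" "b < d*d" using Z by (auto simp: Pi_proj_def)
  show "(Z * Pi_proj d c) $$ (a,b) = (Pi_proj d c * Z) $$ (a,b)"
    unfolding Pi_dg mult_dg_right[OF Z ab] mult_dg_left[OF Z ab] using z[OF ab] by auto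
qed (use Z in \<open>auto simp: Pi_proj_def\<close>)

lemma Pi_sandwich_entry: assumes Z: "Z \<in> carrier_mat (d*d) (d*d)" and ab: "a < d*d" "b < d*d"
  shows "(Pi_proj d c' * Z * Pi_proj d c) $$ (a,b) = (if Lval d a = c' \<and> Lval d b = c then Z $$ (a,b) else 0)"
proof -
  have c1: "Pi_proj d c' * Z \<in> carrier_mat (d*d) (d*d)" unfolding Pi_dg by (rule mult_carrier_mat[OF dg_carrier Z])
  show ?thesis unfolding Pi_dg[of d c] using mult_dg_right[OF c1 ab] 
    unfolding Pi_dg[of d c'] using mult_dg_left[OF Z ab] by simp
qed

lemma sv_unitary: assumes V: "unitary N V" and M: "M \<in> carrier_mat N N"
  shows "singular_values (V * M * mat_adjoint V) = singular_values M"
proof -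
  have Vc: "V \<in> carrier_mat N N" and v1: "mat_adjoint V * V = 1\<^sub>m N" and v2: "V * mat_adjoint V = 1\<^sub>m N"
    using V unfolding unitary_def by auto
  let ?H = "mat_adjoint M * M"
  have Hc: "?H \<in> carrier_mat N N" by (rule mult_carrier_mat[OF adj_carrier[OF M] M])
  have "mat_adjoint (V * M * mat_adjoint V) = V * mat_adjoint M * mat_adjoint V"
  proof -
    have "mat_adjoint (V * M * mat_adjoint V) = mat_adjoint (mat_adjoint V) * mat_adjoint (V * M)"
      by (rule adj_mult[of _ N N], insert Vc M, auto)
    also have "mat_adjoint (V * M) = mat_adjoint M * mat_adjoint V" by (rule adj_mult[OF Vc M])
    also have "mat_adjoint (mat_adjoint V) * (mat_adjoint M * mat_adjoint V) = V * mat_adjoint M * mat_adjoint V"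
      using Vc M by (simp add: assoc_mult_mat[symmetric, of V N N "mat_adjoint M" N "mat_adjoint V" N])
    finally show ?thesis .
  qed
  hence "mat_adjoint (V * M * mat_adjoint V) * (V * M * mat_adjoint V) = 
     V * mat_adjoint M * mat_adjoint V * (V * M * mat_adjoint V)" by simp
  also have "\<dots> = V * mat_adjoint M * (mat_adjoint V * V) * M * mat_adjoint V"
  proof -
    have "V * mat_adjoint M * mat_adjoint V * (V * M * mat_adjoint V) = V * mat_adjoint M * mat_adjoint V * (V * M) * mat_adjoint V"
      using Vc M by (intro assoc_mult_mat[symmetric], auto)
    also have "V * mat_adjoint M * mat_adjoint V * (V * M) = V * mat_adjoint M * (mat_adjoint V * V) * M"
      by (rule assoc4[of _ N N _ N _ N _ N], insert Vc M, auto)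
    finally show ?thesis .
  qed
  also have "\<dots> = V * ?H * mat_adjoint V"
    unfolding v1 using Vc M by (simp add: assoc_mult_mat[of V N N "mat_adjoint M" N M N])
  finally have e: "mat_adjoint (V * M * mat_adjoint V) * (V * M * mat_adjoint V) = V * ?H * mat_adjoint V" .
  have "similar_mat_wit (V * ?H * mat_adjoint V) ?H V (mat_adjoint V)"
    unfolding similar_mat_wit_def Let_def using Vc Hc v1 v2 by auto
  hence "similar_mat (V * ?H * mat_adjoint V) ?H" unfolding similar_mat_def by blast
  hence "char_poly (V * ?H * mat_adjoint V) = char_poly ?H" by (rule char_poly_similar)
  thus ?thesis unfolding singular_values_def e by simp
qed

lemma Lval_idx: "m < d \<Longrightarrow> Lval d (x*d+m) = x + m"
  unfolding Lval_def by simp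

lemma idx_bound: assumes "x < d" "m < d" shows "x*d+m < d*(d::nat)"
proof -
  have "x*d+m < x*d + d" using assms by simp
  also have "\<dots> = (x+1)*d" by simp
  also have "\<dots> \<le> d*d" using assms by (intro mult_right_mono, auto)
  finally show ?thesis .
qed

lemma idx_inj: assumes "m < d" "m' < d" "x*d+m = x'*d+(m'::nat)" shows "x = x' \<and> m = m'"
proof -
  have "x = (x*d+m) div d" using assms(1) by simp
  also have "\<dots> = (x'*d+m') div d" by (simp only: assms(3))
  also have "\<dots> = x'" using assms(2) by simp
  finally have 1: "x = x'" .
  have "m = (x*d+m) mod d" using assms(1) by simp
  also have "\<dots> = (x'*d+m') mod d" by (simp only: assms(3))
  also have "\<dots> = m'" using assms(2) by simp
  finally show ?thesis using 1 by simp
qed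

lemma main_bound:
  assumes X: "X \<in> carrier_mat (d*d) (d*d)" and V: "unitary (d*d) V" and VL: "V * L_AB d = L_AB d * V"
    and j1: "1 \<le> j" and jd: "j \<le> d - 1"
  shows "trace_norm (smode d j (ptrace_B d (V * X * mat_adjoint V))) \<le>
    (\<Sum>c = 0..2*d-2-j. ky_fan_norm (dim_in d j c) (Pi_proj d (c+j) * bmode d j X * Pi_proj d c))"
proof -
  let ?N = "d*d"
  have Vc: "V \<in> carrier_mat ?N ?N" using V unfolding unitary_def by auto
  define Y where "Y = V * X * mat_adjoint V"
  have Yc: "Y \<in> carrier_mat ?N ?N" unfolding Y_def using Vc X by auto
  define \<sigma> where "\<sigma> = ptrace_B d Y"
  define A where "A = smode d j \<sigma>"
  have Ac: "A \<in> carrier_mat d d" unfolding A_def smode_def by simp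
  obtain T where Tb: "\<And>a b. a < d \<Longrightarrow> b < d \<Longrightarrow> cmod (T b a) \<le> 1"
    and Ttr: "(\<Sum>a<d. \<Sum>b<d. T b a * A $$ (a,b)) = complex_of_real (trace_norm A)"
    by (rule tn_attain[OF Ac], rule that, assumption+)
  define Bs where "Bs = {b \<in> {..<d}. b + j < d}"
  define Q where "Q = Bs \<times> {..<d}"
  define rr where "rr q = fst q * d + snd q" for q :: "nat \<times> nat"
  define cc where "cc q = (fst q + j) * d + snd q" for q :: "nat \<times> nat"
  define z where "z q = T (fst q) (fst q + j)" for q :: "nat \<times> nat"
  define S where "S c = {q \<in> Q. fst q + snd q = c}" for c
  define Bc where "Bc c = Pi_proj d (c+j) * Y * Pi_proj d c" for c
  have finQ: "finite Q" unfolding Q_def Bs_def by simp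
  have Qmem: "q \<in> Q \<longleftrightarrow> fst q + j < d \<and> snd q < d" for q unfolding Q_def Bs_def by (cases q, auto)
  have e1: "complex_of_real (trace_norm A) = (\<Sum>q\<in>Q. z q * Y $$ (cc q, rr q))"
  proof -
    have "complex_of_real (trace_norm A) = (\<Sum>a<d. \<Sum>b<d. if a = b + j then T b a * \<sigma> $$ (a,b) else 0)"
      unfolding Ttr[symmetric] by (intro sum.cong refl, simp add: A_def smode_def)
    also have "\<dots> = (\<Sum>b<d. \<Sum>a<d. if a = b + j then T b a * \<sigma> $$ (a,b) else 0)"
      by (rule sum.swap)
    also have "\<dots> = (\<Sum>b<d. if b + j < d then T b (b + j) * \<sigma> $$ (b + j, b) else 0)"
      by (intro sum.cong refl, simp)
    also have "\<dots> = (\<Sum>b\<in>Bs. T b (b + j) * \<sigma> $$ (b + j, b))"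
      unfolding Bs_def by (rule sum.inter_filter[symmetric], simp)
    also have "\<dots> = (\<Sum>b\<in>Bs. \<Sum>m<d. T b (b + j) * Y $$ ((b+j)*d+m, b*d+m))"
      by (intro sum.cong refl, auto simp: Bs_def \<sigma>_def ptrace_B_def sum_distrib_left)
    also have "\<dots> = (\<Sum>q\<in>Q. T (fst q) (fst q + j) * Y $$ ((fst q+j)*d+snd q, fst q*d+snd q))"
      unfolding Q_def by (subst sum.cartesian_product, simp add: case_prod_beta)
    finally show ?thesis unfolding z_def cc_def rr_def .
  qed
  have e2: "(\<Sum>q\<in>Q. z q * Y $$ (cc q, rr q)) = (\<Sum>c\<in>{0..2*d-2-j}. \<Sum>q\<in>S c. z q * Y $$ (cc q, rr q))"
    unfolding S_def by (rule sum.group[symmetric], insert finQ, auto simp: Qmem)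
  have bnd: "cmod (\<Sum>q\<in>S c. z q * Y $$ (cc q, rr q)) \<le> ky_fan_norm (dim_in d j c) (Pi_proj d (c+j) * bmode d j X * Pi_proj d c)"
    for c
  proof -
    have finS: "finite (S c)" unfolding S_def using finQ by simp
    have rng: "\<forall>q\<in>S c. rr q < ?N \<and> cc q < ?N"
      unfolding S_def rr_def cc_def using Qmem idx_bound by auto
    have eq: "(\<Sum>q\<in>S c. z q * Y $$ (cc q, rr q)) = (\<Sum>q\<in>S c. z q * Bc c $$ (cc q, rr q))"
    proof (intro sum.cong refl)
      fix q assume q: "q \<in> S c"
      hence qq: "fst q + j < d" "snd q < d" "fst q + snd q = c" unfolding S_def using Qmem by auto
      have "Lval d (cc q) = c + j" "Lval d (rr q) = c" unfolding cc_def rr_def using qq Lval_idx by auto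
      thus "z q * Y $$ (cc q, rr q) = z q * Bc c $$ (cc q, rr q)"
        unfolding Bc_def using Pi_sandwich_entry[OF Yc, of "cc q" "rr q" "c+j" c] rng q by auto
    qed
    have Bcc: "Bc c \<in> carrier_mat ?N ?N" unfolding Bc_def Pi_dg
      by (rule mult_carrier_mat[OF mult_carrier_mat[OF dg_carrier Yc] dg_carrier])
    have irr: "inj_on rr (S c)"
    proof (rule inj_onI)
      fix q q' assume "q \<in> S c" "q' \<in> S c" and e: "rr q = rr q'"
      hence "snd q < d" "snd q' < d" unfolding S_def using Qmem by auto
      from idx_inj[OF this e[unfolded rr_def]] show "q = q'" by (simp add: prod_eq_iff)
    qed
    have icc: "inj_on cc (S c)"
    proof (rule inj_onI)
      fix q q' assume "q \<in> S c" "q' \<in> S c" and e: "cc q = cc q'"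
      hence "snd q < d" "snd q' < d" unfolding S_def using Qmem by auto
      from idx_inj[OF this e[unfolded cc_def]] show "q = q'" by (simp add: prod_eq_iff)
    qed
    have zb: "\<forall>q\<in>S c. cmod (z q) \<le> 1" unfolding z_def S_def using Qmem Tb by auto
    have card: "card (S c) \<le> dim_in d j c"
    proof -
      have "S c = {(n,m). n + j < d \<and> m < d \<and> n + m = c}" unfolding S_def using Qmem by auto
      thus ?thesis unfolding dim_in_def by simp
    qed
    have "cmod (\<Sum>q\<in>S c. z q * Y $$ (cc q, rr q)) \<le> ky_fan_norm (dim_in d j c) (Bc c)"
      unfolding eq by (rule kf_bound[OF Bcc finS irr icc rng zb card])
    also have "ky_fan_norm (dim_in d j c) (Bc c) = ky_fan_norm (dim_in d j c) (Pi_proj d (c+j) * bmode d j X * Pi_proj d c)"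
    proof -
      let ?P1 = "Pi_proj d (c+j)" and ?P2 = "Pi_proj d c"
      have P1: "?P1 \<in> carrier_mat ?N ?N" and P2: "?P2 \<in> carrier_mat ?N ?N" unfolding Pi_dg by auto
      have Va: "mat_adjoint V \<in> carrier_mat ?N ?N" using Vc by simp
      have cV1: "V * ?P1 = ?P1 * V" by (rule comm_Pi[OF Vc comm_L_entry[OF Vc VL]])
      have cV2: "mat_adjoint V * ?P2 = ?P2 * mat_adjoint V"
      proof (rule comm_Pi[OF Va])
        fix a b assume ab: "a < ?N" "b < ?N" "Lval d a \<noteq> Lval d b"
        have "V $$ (b,a) = 0" by (rule comm_L_entry[OF Vc VL], insert ab, auto)
        thus "mat_adjoint V $$ (a,b) = 0" using ab Vc by simp
      qed
      have "Bc c = ?P1 * V * X * mat_adjoint V * ?P2" unfolding Bc_def Y_def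
        using assoc5[OF P1 Vc X Va] by simp
      also have "?P1 * V = V * ?P1" using cV1 by simp
      also have "V * ?P1 * X * mat_adjoint V * ?P2 = V * ?P1 * X * (mat_adjoint V * ?P2)"
        by (rule assoc_mult_mat, insert Vc P1 X Va P2, auto)
      also have "\<dots> = V * ?P1 * X * (?P2 * mat_adjoint V)" unfolding cV2 ..
      also have "\<dots> = V * (?P1 * X * ?P2) * mat_adjoint V" by (rule assoc6[OF Vc P1 X P2 Va])
      finally have b1: "Bc c = V * (?P1 * X * ?P2) * mat_adjoint V" .
      have b2: "?P1 * X * ?P2 = ?P1 * bmode d j X * ?P2"
      proof (rule eq_matI)
        have bX: "bmode d j X \<in> carrier_mat ?N ?N" unfolding bmode_def by simp
        fix a b assume "a < dim_row (?P1 * bmode d j X * ?P2)" "b < dim_col (?P1 * bmode d j X * ?P2)"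
        hence ab: "a < ?N" "b < ?N" using P1 P2 by auto
        show "(?P1 * X * ?P2) $$ (a,b) = (?P1 * bmode d j X * ?P2) $$ (a,b)"
          unfolding Pi_sandwich_entry[OF X ab] Pi_sandwich_entry[OF bX ab] using ab by (simp add: bmode_def)
      qed (use P1 P2 in auto)
      have Mc: "?P1 * X * ?P2 \<in> carrier_mat ?N ?N" using P1 X P2 by auto
      have "singular_values (Bc c) = singular_values (?P1 * X * ?P2)"
        unfolding b1 by (rule sv_unitary[OF V Mc])
      also have "\<dots> = singular_values (?P1 * bmode d j X * ?P2)" by (simp only: b2)
      finally show ?thesis unfolding ky_fan_norm_def by simp
    qed
    finally show ?thesis .
  qed
  have "trace_norm A = Re (complex_of_real (trace_norm A))" by simp
  also have "\<dots> \<le> cmod (complex_of_real (trace_norm A))" by (rule complex_Re_le_cmod)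
  also have "\<dots> \<le> (\<Sum>c\<in>{0..2*d-2-j}. cmod (\<Sum>q\<in>S c. z q * Y $$ (cc q, rr q)))"
    unfolding e1 e2 by (rule norm_sum)
  also have "\<dots> \<le> (\<Sum>c = 0..2*d-2-j. ky_fan_norm (dim_in d j c) (Pi_proj d (c+j) * bmode d j X * Pi_proj d c))"
    by (rule sum_mono, rule bnd)
  finally show ?thesis unfolding A_def \<sigma>_def Y_def .
qed

theorem mainTheorem7:
  fixes d j :: nat and \<rho> :: "complex mat"
  assumes "density_op d \<rho>"
    and "1 \<le> j" and "j \<le> d - 1"
  shows "DeltaM_A d j \<rho> \<le>
    (\<Sum>c = 0..2*d-2-j. ky_fan_norm (dim_in d j c)
        (Pi_proj d (c+j) * bmode d j (tensor d \<rho> \<rho>) * Pi_proj d c))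
    - trace_norm (smode d j \<rho>)"
proof -
  let ?X = "tensor d \<rho> \<rho>"
  let ?R = "(\<Sum>c = 0..2*d-2-j. ky_fan_norm (dim_in d j c)
        (Pi_proj d (c+j) * bmode d j (tensor d \<rho> \<rho>) * Pi_proj d c))"
  let ?S = "{Mj d j (ptrace_B d (V * tensor d \<rho> \<rho> * mat_adjoint V)) | V.
            unitary (d*d) V \<and> V * L_AB d = L_AB d * V}"
  have Xc: "?X \<in> carrier_mat (d*d) (d*d)" unfolding tensor_def by simp
  have Lc: "L_AB d \<in> carrier_mat (d*d) (d*d)" unfolding L_AB_def by simp
  have u1: "unitary (d*d) (1\<^sub>m (d*d))" unfolding unitary_def by simp
  have c1: "1\<^sub>m (d*d) * L_AB d = L_AB d * 1\<^sub>m (d*d)" using Lc by simp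
  have ne: "?S \<noteq> {}" using u1 c1 by blast
  have "Sup ?S \<le> ?R"
  proof (rule cSup_least[OF ne])
    fix x assume "x \<in> ?S"
    then obtain V where V: "unitary (d*d) V" "V * L_AB d = L_AB d * V"
      and x: "x = Mj d j (ptrace_B d (V * tensor d \<rho> \<rho> * mat_adjoint V))" by blast
    show "x \<le> ?R" unfolding x Mj_def by (rule main_bound[OF Xc V assms(2,3)])
  qed
  thus ?thesis unfolding DeltaM_A_def Mj_def by simp
qed

end
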